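(* Let $T$ be a tree with $p\ge 4$ pendant vertices and let $u_1,u_2,u_3,u_4$ be four distinct pendant vertices of $T$. Let $H=\bigcup_{1\le i<j\le 4}P_{u_i,u_j}$ be the minimal subtree of $T$ containing these four vertices. If $m(T,1)\ge p-2$, then $m(H,1)\ge 2$.
   Context: $m(G,\lambda)$ denotes the multiplicity of $\lambda$ as an eigenvalue of the Laplacian matrix $L(G)=D(G)-A(G)$ (zero if not an eigenvalue). A pendant vertex has degree $1$. $P_{r,s}$ is the path in $T$ from $r$ to $s$. *)

theory Defs
  imports "Jordan_Normal_Form.Char_Poly"
begin

definition simple_graph :: "'a set \<Rightarrow> ('a \<times> 'a) set \<Rightarrow> bool" where
  "simple_graph V E \<longleftrightarrow> finite V \<and> E \<subseteq> V \<times> V \<and> sym E \<and> (\<forall>v. (v, v) \<notin> E)"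

definition walk :: "('a \<times> 'a) set \<Rightarrow> 'a list \<Rightarrow> bool" where
  "walk E xs \<longleftrightarrow> xs \<noteq> [] \<and> (\<forall>i. Suc i < length xs \<longrightarrow> (xs ! i, xs ! Suc i) \<in> E)"

definition is_path :: "('a \<times> 'a) set \<Rightarrow> 'a \<Rightarrow> 'a \<Rightarrow> 'a list \<Rightarrow> bool" where
  "is_path E r s xs \<longleftrightarrow> walk E xs \<and> distinct xs \<and> hd xs = r \<and> last xs = s"

definition is_cycle :: "('a \<times> 'a) set \<Rightarrow> 'a list \<Rightarrow> bool" where
  "is_cycle E xs \<longleftrightarrow> walk E xs \<and> distinct xs \<and> length xs \<ge> 3 \<and> (last xs, hd xs) \<in> E"

definition connected_graph :: "'a set \<Rightarrow> ('a \<times> 'a) set \<Rightarrow> bool" where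
  "connected_graph V E \<longleftrightarrow> V \<noteq> {} \<and> (\<forall>r\<in>V. \<forall>s\<in>V. \<exists>xs. is_path E r s xs)"

definition is_tree :: "'a set \<Rightarrow> ('a \<times> 'a) set \<Rightarrow> bool" where
  "is_tree V E \<longleftrightarrow> simple_graph V E \<and> connected_graph V E \<and> (\<nexists>xs. is_cycle E xs)"

definition degree :: "'a set \<Rightarrow> ('a \<times> 'a) set \<Rightarrow> 'a \<Rightarrow> nat" where
  "degree V E v = card {w \<in> V. (v, w) \<in> E}"

definition pendant_vertices :: "'a set \<Rightarrow> ('a \<times> 'a) set \<Rightarrow> 'a set" where
  "pendant_vertices V E = {v \<in> V. degree V E v = 1}"

text \<open>Vertices and edges of the path P_{r,s} (in a tree the path is unique;
  we take the union over all paths from r to s).\<close>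
definition path_verts :: "('a \<times> 'a) set \<Rightarrow> 'a \<Rightarrow> 'a \<Rightarrow> 'a set" where
  "path_verts E r s = \<Union>{set xs | xs. is_path E r s xs}"

definition path_edges :: "('a \<times> 'a) set \<Rightarrow> 'a \<Rightarrow> 'a \<Rightarrow> ('a \<times> 'a) set" where
  "path_edges E r s = \<Union>{{(xs ! i, xs ! Suc i) | i. Suc i < length xs} \<union>
                          {(xs ! Suc i, xs ! i) | i. Suc i < length xs} | xs. is_path E r s xs}"

definition vlist :: "'a set \<Rightarrow> 'a list" where
  "vlist V = (SOME xs. distinct xs \<and> set xs = V)"

definition laplacian :: "'a set \<Rightarrow> ('a \<times> 'a) set \<Rightarrow> real mat" where
  "laplacian V E = mat (card V) (card V) (\<lambda>(i, j).
     if i = j then real (degree V E (vlist V ! i))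
     else if (vlist V ! i, vlist V ! j) \<in> E then -1 else 0)"

text \<open>m(G, lambda): multiplicity of lambda as a root of the characteristic
  polynomial of the Laplacian (0 if not an eigenvalue).\<close>
definition lap_mult :: "'a set \<Rightarrow> ('a \<times> 'a) set \<Rightarrow> real \<Rightarrow> nat" where
  "lap_mult V E lam = order lam (char_poly (laplacian V E))"

end

theory Submission
  imports Defs "Jordan_Normal_Form.Jordan_Normal_Form_Uniqueness" "Jordan_Normal_Form.Jordan_Normal_Form_Existence"
   "Jordan_Normal_Form.DL_Rank"
begin

lemma (in vectorspace) fin_dim_subspace:
  assumes fd: "fin_dim" and X: "subspace K X V"
  shows "vectorspace.fin_dim K (vs X)"
proof -
  interpret X: vectorspace K "vs X" using subspace_is_vs[OF X] .
  let ?P = "\<lambda>S. S \<subseteq> carrier (vs X) \<and> X.lin_indpt S"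
  have bound: "finite S \<and> card S \<le> dim" if "?P S" for S
  proof -
    have SX: "S \<subseteq> X" using that by simp
    have "lin_indpt S"
      using that span_li_not_depend(2)[OF SX is_module[OF X]] by simp
    moreover have "S \<subseteq> carrier V" using SX X unfolding subspace_def submodule_def by auto
    ultimately show ?thesis using li_le_dim[OF fd] by auto
  qed
  have "?P {}" by (simp add: X.lin_dep_def)
  from maximal_exists[of ?P dim, OF bound this] obtain A where A: "finite A" "maximal A ?P" by blast
  from X.max_li_is_basis[OF A(2)] have "X.basis A" .
  then show ?thesis unfolding X.fin_dim_def X.basis_def using A(1) by blast
qed

lemma (in linear_map) dim_im_le:
  assumes "W.fin_dim"
  shows "vectorspace.dim K (W.vs imT) \<le> W.dim"
  by (rule W.subspace_dim[OF imT_is_subspace assms W.fin_dim_subspace[OF assms imT_is_subspace]])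

lemma (in kernel) fin_dim_K: "Ker.fin_dim"
proof -
  from kernel_basis_exists[OF A] obtain B where "finite B" "basis B" by blast
  thus ?thesis unfolding Ker.fin_dim_def Ker.basis_def by blast
qed

lemma kernel_linear_map:
  fixes A :: "'a::field mat"
  assumes A: "A \<in> carrier_mat nra nc" and D: "D \<in> carrier_mat nrd m" and R: "R \<in> carrier_mat m nc"
  and maps: "\<And>v. v \<in> mat_kernel A \<Longrightarrow> R *\<^sub>v v \<in> mat_kernel D"
  shows "linear_map class_ring (kernel.VK nc A) (kernel.VK m D) (\<lambda>v. R *\<^sub>v v)"
proof -
  interpret KA: kernel nra nc A by (unfold_locales, rule A)
  interpret KD: kernel nrd m D by (unfold_locales, rule D)
  have hom: "(\<lambda>v. R *\<^sub>v v) \<in> module_hom class_ring KA.VK KD.VK"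
    unfolding module_hom_def using maps mat_kernel_carrier[OF A] R
    by (auto simp: mult_mat_vec intro!: mult_add_distrib_mat_vec[OF R])
  show ?thesis
    by (intro linear_map.intro mod_hom.intro mod_hom_axioms.intro KA.Ker.vectorspace_axioms
      KD.Ker.vectorspace_axioms KA.Ker.module_axioms KD.Ker.module_axioms hom)
qed

lemma kernel_dim_inj_le:
  fixes A :: "'a::field mat"
  assumes A: "A \<in> carrier_mat nra nc" and D: "D \<in> carrier_mat nrd m" and R: "R \<in> carrier_mat m nc"
  and maps: "\<And>v. v \<in> mat_kernel A \<Longrightarrow> R *\<^sub>v v \<in> mat_kernel D"
  and inj: "\<And>v. v \<in> mat_kernel A \<Longrightarrow> R *\<^sub>v v = 0\<^sub>v m \<Longrightarrow> v = 0\<^sub>v nc"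
  shows "kernel_dim A \<le> kernel_dim D"
proof -
  interpret KA: kernel nra nc A by (unfold_locales, rule A)
  interpret KD: kernel nrd m D by (unfold_locales, rule D)
  note lm = kernel_linear_map[OF A D R maps]
  have mh: "mod_hom class_ring KA.VK KD.VK (\<lambda>v. R *\<^sub>v v)" using lm unfolding linear_map_def by blast
  have ker: "carrier (KA.VK\<lparr>carrier := mod_hom.ker KA.VK KD.VK (\<lambda>v. R *\<^sub>v v)\<rparr>) = {0\<^sub>v nc}"
    using inj A R mod_hom.ker_def[OF mh] by (auto simp: mat_kernel_def)
  have injT: "inj_on (\<lambda>v. R *\<^sub>v v) (carrier KA.VK)"
    using linear_map.Ke0_imp_inj[OF lm] ker by simp
  have d0: "vectorspace.dim class_ring (KA.VK\<lparr>carrier := mod_hom.ker KA.VK KD.VK (\<lambda>v. R *\<^sub>v v)\<rparr>) = 0"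
    using linear_map.inj_imp_dim_ker0[OF lm injT] by simp
  note rn = linear_map.rank_nullity[OF lm KA.fin_dim_K]
  note le = linear_map.dim_im_le[OF lm KD.fin_dim_K]
  show ?thesis using rn le d0 by simp
qed

lemma kernel_dim_zero_rows: "kernel.dim r (0\<^sub>m 0 r :: 'a :: field mat) = r"
proof -
  have ref: "row_echelon_form (0\<^sub>m 0 r :: 'a mat)"
    unfolding row_echelon_form_def pivot_fun_def by auto
  from find_base_vectors(6)[OF ref, of 0 r] show ?thesis by simp
qed

lemma kernel_dim_stack:
  fixes B :: "'a::field mat"
  assumes B: "B \<in> carrier_mat nr nc" and Em: "Em \<in> carrier_mat r nc"
  and S: "S \<in> carrier_mat nrs nc" and kS: "mat_kernel S = {v \<in> mat_kernel B. Em *\<^sub>v v = 0\<^sub>v r}"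
  shows "kernel_dim B \<le> kernel_dim S + r"
proof -
  let ?Z = "0\<^sub>m 0 r :: 'a mat"
  have Z: "?Z \<in> carrier_mat 0 r" by simp
  interpret KB: kernel nr nc B by (unfold_locales, rule B)
  interpret KS: kernel nrs nc S by (unfold_locales, rule S)
  interpret KZ: kernel 0 r ?Z by (unfold_locales, rule Z)
  have maps: "Em *\<^sub>v v \<in> mat_kernel ?Z" if "v \<in> mat_kernel B" for v
    by (rule mat_kernelI[OF Z], rule carrier_vecI, insert Em, auto)
  note lm = kernel_linear_map[OF B Z Em maps]
  have mh: "mod_hom class_ring KB.VK KZ.VK (\<lambda>v. Em *\<^sub>v v)" using lm unfolding linear_map_def by blast
  have ker: "mod_hom.ker KB.VK KZ.VK (\<lambda>v. Em *\<^sub>v v) = mat_kernel S"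
    using mod_hom.ker_def[OF mh] kS by auto
  note rn = linear_map.rank_nullity[OF lm KB.fin_dim_K]
  note le = linear_map.dim_im_le[OF lm KZ.fin_dim_K]
  have "KZ.dim = r" by (rule kernel_dim_zero_rows)
  moreover have "vectorspace.dim class_ring (KB.VK\<lparr>carrier := mat_kernel S\<rparr>) = KS.dim" by simp
  ultimately show ?thesis using rn le unfolding ker KB.kernel_dim KS.kernel_dim by linarith
qed

lemma ofr_order: "Polynomial.order (of_real x :: complex) (map_poly of_real f) = Polynomial.order x f"
proof -
  have "map_poly_inj_idom_divide_hom (of_real :: real \<Rightarrow> complex)"
    by (unfold_locales)
  from map_poly_inj_idom_divide_hom.order_hom[OF this] show ?thesis .
qed

lemma order_real_complex:
  assumes "A \<in> carrier_mat n n"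
  shows "Polynomial.order (1::real) (char_poly A) = Polynomial.order (1::complex) (char_poly (map_mat complex_of_real A))"
  unfolding of_real_hom.char_poly_hom[OF assms] using ofr_order[of 1 "char_poly A"] by simp

lemma kernel_dim_cong: "dim_col A = dim_col B \<Longrightarrow> mat_kernel A = mat_kernel B \<Longrightarrow> kernel_dim A = kernel_dim B"
  by (simp add: kernel_dim_def)

lemma sum_min1_le: "sum_list (map (min (1::nat)) xs) \<le> sum_list xs"
  by (induct xs) auto

lemma sum_min12: "sum_list (map (min (1::nat)) xs) \<le> sum_list (map (min 2) xs)"
  by (induct xs) auto

lemma sum_min_eq: "sum_list (map (min (2::nat)) xs) = sum_list (map (min 1) xs) \<Longrightarrow> sum_list xs = sum_list (map (min 1) xs)"
proof (induct xs)
  case (Cons a xs)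
  have "min 1 a \<le> min 2 a" by simp
  with sum_min12[of xs] Cons(2) have "min 2 a = min 1 a" "sum_list (map (min (2::nat)) xs) = sum_list (map (min 1) xs)" by auto
  with Cons(1) show ?case by auto
qed simp

lemma char_matrix_pow:
  assumes A: "A \<in> carrier_mat n n"
  shows "char_matrix A e ^\<^sub>m 1 = char_matrix A e" "char_matrix A e ^\<^sub>m 2 = char_matrix A e * char_matrix A e"
proof -
  have C: "char_matrix A e \<in> carrier_mat n n" using A unfolding char_matrix_def by auto
  show "char_matrix A e ^\<^sub>m 1 = char_matrix A e" using C by (simp add: numeral_2_eq_2)
  show "char_matrix A e ^\<^sub>m 2 = char_matrix A e * char_matrix A e" using C by (simp add: numeral_2_eq_2)
qed

lemma geo_le_alg:
  fixes A :: "complex mat"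
  assumes A: "A \<in> carrier_mat n n"
  shows "kernel_dim (char_matrix A e) \<le> Polynomial.order e (char_poly A)"
proof -
  from char_poly_factorized[OF A] obtain as where "char_poly A = (\<Prod>a\<leftarrow>as. [:- a, 1:])" by auto
  from jordan_nf_exists[OF A this] obtain n_as where jnf: "jordan_nf A n_as" by auto
  have "kernel_dim (char_matrix A e) = dim_gen_eigenspace A e 1"
    unfolding dim_gen_eigenspace_def char_matrix_pow[OF A] ..
  also have "\<dots> = sum_list (map (min 1) (map fst (filter (\<lambda>(n, e'). e' = e) n_as)))"
    by (rule dim_gen_eigenspace[OF jnf])
  also have "\<dots> \<le> sum_list (map fst (filter (\<lambda>(n, e'). e' = e) n_as))" by (rule sum_min1_le)
  also have "\<dots> = Polynomial.order e (char_poly A)"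
    unfolding jordan_nf_order[OF jnf] by (metis (no_types, lifting) case_prod_beta' filter_cong)
  finally show ?thesis .
qed

lemma alg_eq_geo:
  fixes A :: "complex mat"
  assumes A: "A \<in> carrier_mat n n"
  and K: "mat_kernel (char_matrix A e * char_matrix A e) = mat_kernel (char_matrix A e)"
  shows "Polynomial.order e (char_poly A) = kernel_dim (char_matrix A e)"
proof -
  from char_poly_factorized[OF A] obtain as where "char_poly A = (\<Prod>a\<leftarrow>as. [:- a, 1:])" by auto
  from jordan_nf_exists[OF A this] obtain n_as where jnf: "jordan_nf A n_as" by auto
  let ?xs = "map fst (filter (\<lambda>(n, e'). e' = e) n_as)"
  have C: "char_matrix A e \<in> carrier_mat n n" using A unfolding char_matrix_def by auto
  have 1: "kernel_dim (char_matrix A e) = sum_list (map (min 1) ?xs)"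
    using dim_gen_eigenspace[OF jnf, of e 1] unfolding dim_gen_eigenspace_def char_matrix_pow[OF A] .
  have "kernel_dim (char_matrix A e * char_matrix A e) = sum_list (map (min 2) ?xs)"
    using dim_gen_eigenspace[OF jnf, of e 2] unfolding dim_gen_eigenspace_def char_matrix_pow[OF A] .
  moreover have "kernel_dim (char_matrix A e * char_matrix A e) = kernel_dim (char_matrix A e)"
    by (rule kernel_dim_cong[OF _ K], insert C, simp)
  ultimately have "sum_list (map (min 2) ?xs) = sum_list (map (min 1) ?xs)" using 1 by simp
  from sum_min_eq[OF this] have "sum_list ?xs = kernel_dim (char_matrix A e)" using 1 by simp
  moreover have "sum_list ?xs = Polynomial.order e (char_poly A)"
    unfolding jordan_nf_order[OF jnf] by (metis (no_types, lifting) case_prod_beta' filter_cong)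
  ultimately show ?thesis by simp
qed

lemma herm_kernel_sq:
  fixes B :: "complex mat"
  assumes B: "B \<in> carrier_mat n n" and herm: "\<And>i j. i < n \<Longrightarrow> j < n \<Longrightarrow> B $$ (i,j) = cnj (B $$ (j,i))"
  shows "mat_kernel (B * B) = mat_kernel B"
proof
  show "mat_kernel B \<subseteq> mat_kernel (B * B)" by (rule mat_kernel_mult_subset[OF B B])
  show "mat_kernel (B * B) \<subseteq> mat_kernel B"
  proof
    fix v assume vk: "v \<in> mat_kernel (B * B)"
    have BB: "B * B \<in> carrier_mat n n" using B by simp
    from mat_kernelD[OF BB vk] have v: "v \<in> carrier_vec n" and z: "B * B *\<^sub>v v = 0\<^sub>v n" by auto
    define w where "w = B *\<^sub>v v"
    have w: "w \<in> carrier_vec n" unfolding w_def using B v by auto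
    have Bw: "B *\<^sub>v w = 0\<^sub>v n" unfolding w_def using z assoc_mult_mat_vec[OF B B v] by simp
    have wi: "w $ i = (\<Sum>j = 0..<n. B $$ (i, j) * v $ j)" if i: "i < n" for i
    proof -
      have "w $ i = row B i \<bullet> v" unfolding w_def using B i by simp
      also have "\<dots> = (\<Sum>j = 0..<n. row B i $ j * v $ j)" using v by (simp add: scalar_prod_def)
      also have "\<dots> = (\<Sum>j = 0..<n. B $$ (i, j) * v $ j)" using B i by (intro sum.cong) auto
      finally show ?thesis .
    qed
    have Bwj: "(\<Sum>i = 0..<n. B $$ (j, i) * w $ i) = 0" if "j < n" for j
    proof -
      have "(B *\<^sub>v w) $ j = 0" using Bw that by simp
      moreover have "(B *\<^sub>v w) $ j = row B j \<bullet> w" using B that by simp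
      moreover have "row B j \<bullet> w = (\<Sum>i = 0..<n. row B j $ i * w $ i)" using w by (simp add: scalar_prod_def)
      moreover have "\<dots> = (\<Sum>i = 0..<n. B $$ (j, i) * w $ i)" using B that by (intro sum.cong) auto
      ultimately show ?thesis by simp
    qed
    have "(\<Sum>i = 0..<n. cnj (w $ i) * w $ i) = (\<Sum>i = 0..<n. cnj (w $ i) * (\<Sum>j = 0..<n. B $$ (i, j) * v $ j))"
      by (rule sum.cong, auto simp: wi)
    also have "\<dots> = (\<Sum>i = 0..<n. \<Sum>j = 0..<n. cnj (w $ i) * B $$ (i, j) * v $ j)"
      by (simp add: sum_distrib_left mult.assoc)
    also have "\<dots> = (\<Sum>j = 0..<n. \<Sum>i = 0..<n. cnj (w $ i) * B $$ (i, j) * v $ j)"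
      by (rule sum.swap)
    also have "\<dots> = (\<Sum>j = 0..<n. v $ j * cnj (\<Sum>i = 0..<n. B $$ (j, i) * w $ i))"
    proof (rule sum.cong[OF refl])
      fix j assume j: "j \<in> {0..<n}"
      have "(\<Sum>i = 0..<n. cnj (w $ i) * B $$ (i, j) * v $ j) = v $ j * (\<Sum>i = 0..<n. cnj (B $$ (j, i) * w $ i))"
        unfolding sum_distrib_left
      proof (rule sum.cong[OF refl])
        fix i assume i: "i \<in> {0..<n}"
        have "B $$ (i, j) = cnj (B $$ (j, i))" using i j by (intro herm) auto
        thus "cnj (w $ i) * B $$ (i, j) * v $ j = v $ j * cnj (B $$ (j, i) * w $ i)" by (simp add: mult_ac)
      qed
      thus "(\<Sum>i = 0..<n. cnj (w $ i) * B $$ (i, j) * v $ j) = v $ j * cnj (\<Sum>i = 0..<n. B $$ (j, i) * w $ i)"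
        by (simp add: cnj_sum)
    qed
    also have "\<dots> = 0" using Bwj by simp
    finally have s0: "(\<Sum>i = 0..<n. cnj (w $ i) * w $ i) = 0" .
    have eq: "(\<Sum>i = 0..<n. cnj (w $ i) * w $ i) = of_real (\<Sum>i = 0..<n. (cmod (w $ i))^2)"
      unfolding of_real_sum by (rule sum.cong[OF refl], metis complex_norm_square mult.commute)
    have "complex_of_real (\<Sum>i = 0..<n. (cmod (w $ i))^2) = 0" using s0 eq by metis
    hence "(\<Sum>i = 0..<n. (cmod (w $ i))^2) = 0" by (simp only: of_real_eq_0_iff)
    hence "\<forall>i\<in>{0..<n}. (cmod (w $ i))^2 = 0" by (subst (asm) sum_nonneg_eq_0_iff) auto
    hence "w = 0\<^sub>v n" using w by (intro eq_vecI) auto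
    thus "v \<in> mat_kernel B" unfolding w_def using v B by (intro mat_kernelI) auto
  qed
qed


fun wk :: "('a \<times> 'a) set \<Rightarrow> 'a list \<Rightarrow> bool" where
  "wk E [] = False"
| "wk E [a] = True"
| "wk E (a # b # xs) = ((a, b) \<in> E \<and> wk E (b # xs))"

lemma walk_Cons2: "walk E (a # b # xs) \<longleftrightarrow> (a, b) \<in> E \<and> walk E (b # xs)"
proof
  assume w: "walk E (a # b # xs)"
  have "(a, b) \<in> E" using w unfolding walk_def by (metis One_nat_def length_Cons less_Suc_eq_0_disj nth_Cons_0 nth_Cons_Suc zero_less_Suc)
  moreover have "walk E (b # xs)" unfolding walk_def
  proof (intro conjI allI impI)
    fix i assume "Suc i < length (b # xs)"
    hence "Suc (Suc i) < length (a # b # xs)" by simp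
    with w have "((a # b # xs) ! Suc i, (a # b # xs) ! Suc (Suc i)) \<in> E" unfolding walk_def by blast
    thus "((b # xs) ! i, (b # xs) ! Suc i) \<in> E" by simp
  qed simp
  ultimately show "(a, b) \<in> E \<and> walk E (b # xs)" ..
next
  assume "(a, b) \<in> E \<and> walk E (b # xs)"
  then show "walk E (a # b # xs)" unfolding walk_def
    by (auto simp: nth_Cons split: nat.splits)
qed

lemma walk_wk: "walk E xs = wk E xs"
proof (induct xs rule: wk.induct)
  case (1 E) then show ?case by (simp add: walk_def)
next
  case (2 E a) then show ?case by (simp add: walk_def)
next
  case (3 E a b xs) then show ?case by (simp add: walk_Cons2)
qed

lemma wk_nth: "wk E xs \<Longrightarrow> Suc i < length xs \<Longrightarrow> (xs ! i, xs ! Suc i) \<in> E"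
  by (metis walk_def walk_wk)

lemma wk_ne: "wk E xs \<Longrightarrow> xs \<noteq> []" by auto

lemma wk_Cons: "wk E xs \<Longrightarrow> (y, hd xs) \<in> E \<Longrightarrow> wk E (y # xs)"
  by (cases xs) auto

lemma wk_snoc: "wk E xs \<Longrightarrow> (last xs, y) \<in> E \<Longrightarrow> wk E (xs @ [y])"
  by (induct E xs rule: wk.induct) auto

lemma wk_rev: "sym E \<Longrightarrow> wk E xs \<Longrightarrow> wk E (rev xs)"
proof (induct E xs rule: wk.induct)
  case (3 E a b xs)
  then have "wk E (rev (b # xs))" by simp
  moreover have "(last (rev (b # xs)), a) \<in> E" using 3(2,3) by (simp add: sym_def)
  ultimately show ?case using wk_snoc by fastforce
qed auto

lemma wk_take: "wk E xs \<Longrightarrow> 0 < k \<Longrightarrow> wk E (take k xs)"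
proof (induct E xs arbitrary: k rule: wk.induct)
  case (2 E a) then show ?case by (cases k) auto
next
  case (3 E a b xs)
  show ?case
  proof (cases k)
    case 0 then show ?thesis using 3 by simp
  next
    case (Suc k')
    show ?thesis
    proof (cases k')
      case 0 then show ?thesis using Suc by simp
    next
      case (Suc k'')
      have "wk E (take k' (b # xs))" using 3(1)[of k'] 3(2) Suc by simp
      then show ?thesis using \<open>k = Suc k'\<close> Suc 3(2) by simp
    qed
  qed
qed auto

lemma wk_mono: "wk E xs \<Longrightarrow> E \<subseteq> F \<Longrightarrow> wk F xs"
  by (induct E xs rule: wk.induct) auto

lemma wk_restrict: "wk E xs \<Longrightarrow> u \<notin> set xs \<Longrightarrow> wk {(a, b) \<in> E. a \<noteq> u \<and> b \<noteq> u} xs"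
  by (induct E xs rule: wk.induct) auto

lemma wk_set: "wk E xs \<Longrightarrow> hd xs \<in> V \<Longrightarrow> E \<subseteq> V \<times> V \<Longrightarrow> set xs \<subseteq> V"
  by (induct E xs rule: wk.induct) auto

definition nbrs :: "'a set \<Rightarrow> ('a \<times> 'a) set \<Rightarrow> 'a \<Rightarrow> 'a set" where
  "nbrs V E v = {w \<in> V. (v, w) \<in> E}"

lemma degree_nbrs: "degree V E v = card (nbrs V E v)"
  unfolding degree_def nbrs_def ..

lemma sg_finite_nbrs: "simple_graph V E \<Longrightarrow> finite (nbrs V E v)"
  unfolding simple_graph_def nbrs_def by auto

text \<open>An interior vertex of a path has two distinct neighbours.\<close>
lemma pendant_not_interior:
  assumes sg: "simple_graph V E" and deg: "degree V E u = 1"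
  and p: "is_path E r s xs" and ur: "u \<noteq> r" and us: "u \<noteq> s"
  shows "u \<notin> set xs"
proof
  assume "u \<in> set xs"
  then obtain i where i: "i < length xs" "xs ! i = u" by (metis in_set_conv_nth)
  from p have w: "wk E xs" and d: "distinct xs" and h: "hd xs = r" and l: "last xs = s"
    unfolding is_path_def walk_wk by auto
  have ne: "xs \<noteq> []" using w by auto
  have i0: "i \<noteq> 0" using i h ur ne by (metis hd_conv_nth)
  have il: "i \<noteq> length xs - 1" using i l us ne by (metis last_conv_nth)
  obtain j where j: "i = Suc j" using i0 by (cases i) auto
  have e1: "(xs ! j, u) \<in> E" using wk_nth[OF w, of j] i j by auto
  have e2: "(u, xs ! Suc i) \<in> E" using wk_nth[OF w, of i] i il by auto
  have sym: "sym E" and EV: "E \<subseteq> V \<times> V" using sg unfolding simple_graph_def by auto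
  have e1': "(u, xs ! j) \<in> E" using e1 sym by (meson symD)
  have neq: "xs ! j \<noteq> xs ! Suc i" using d i il j by (simp add: nth_eq_iff_index_eq)
  have sub: "{xs ! j, xs ! Suc i} \<subseteq> nbrs V E u" using e1' e2 EV unfolding nbrs_def by auto
  have "2 \<le> card (nbrs V E u)"
    using card_mono[OF sg_finite_nbrs[OF sg] sub] neq by simp
  with deg show False unfolding degree_nbrs by simp
qed

definition rmE :: "('a \<times> 'a) set \<Rightarrow> 'a \<Rightarrow> ('a \<times> 'a) set" where
  "rmE E u = {(a, b) \<in> E. a \<noteq> u \<and> b \<noteq> u}"

lemma path_rm_iff:
  assumes sg: "simple_graph V E" and deg: "degree V E u = 1" and ur: "u \<noteq> r" and us: "u \<noteq> s"
  shows "is_path (rmE E u) r s xs \<longleftrightarrow> is_path E r s xs"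
proof
  assume "is_path (rmE E u) r s xs"
  then show "is_path E r s xs" unfolding is_path_def walk_wk rmE_def using wk_mono by blast
next
  assume p: "is_path E r s xs"
  have "u \<notin> set xs" by (rule pendant_not_interior[OF sg deg p ur us])
  with p show "is_path (rmE E u) r s xs" unfolding is_path_def walk_wk rmE_def using wk_restrict[of E xs u] by simp
qed

lemma nbrs_rm: "v \<noteq> u \<Longrightarrow> nbrs (V - {u}) (rmE E u) v = nbrs V E v - {u}"
  unfolding nbrs_def rmE_def by auto

lemma tree_rm:
  assumes tree: "is_tree V E" and deg: "degree V E u = 1" and a: "a \<in> V" "a \<noteq> u"
  shows "is_tree (V - {u}) (rmE E u)"
proof -
  have sg: "simple_graph V E" and con: "connected_graph V E" and nc: "\<nexists>xs. is_cycle E xs"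
    using tree unfolding is_tree_def by auto
  have sg': "simple_graph (V - {u}) (rmE E u)"
    using sg unfolding simple_graph_def rmE_def sym_def by auto
  have con': "connected_graph (V - {u}) (rmE E u)"
    unfolding connected_graph_def
  proof (intro conjI ballI)
    show "V - {u} \<noteq> {}" using a by auto
    fix r s assume r: "r \<in> V - {u}" and s: "s \<in> V - {u}"
    then obtain xs where "is_path E r s xs" using con unfolding connected_graph_def by blast
    then show "\<exists>xs. is_path (rmE E u) r s xs" using path_rm_iff[OF sg deg, of r s] r s by blast
  qed
  have nc': "\<nexists>xs. is_cycle (rmE E u) xs"
  proof
    assume "\<exists>xs. is_cycle (rmE E u) xs"
    then obtain xs where "is_cycle (rmE E u) xs" by blast
    then have "is_cycle E xs" unfolding is_cycle_def walk_wk rmE_def using wk_mono by blast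
    with nc show False by blast
  qed
  show ?thesis unfolding is_tree_def using sg' con' nc' by blast
qed

lemma pendant_nbr:
  assumes sg: "simple_graph V E" and deg: "degree V E u = 1"
  obtains w where "nbrs V E u = {w}"
  using deg unfolding degree_nbrs by (metis card_1_singletonE)

lemma pendant_not_adj:
  assumes tree: "is_tree V E" and da: "degree V E a = 1" and du: "degree V E u = 1"
  and b: "b \<in> V" "b \<noteq> a" "b \<noteq> u" and a: "a \<in> V" and au: "a \<noteq> u"
  shows "(a, u) \<notin> E"
proof
  assume e: "(a, u) \<in> E"
  have sg: "simple_graph V E" and con: "connected_graph V E" using tree unfolding is_tree_def by auto
  obtain xs where p: "is_path E a b xs" using con a b unfolding connected_graph_def by blast
  have w: "wk E xs" and d: "distinct xs" and h: "hd xs = a" and l: "last xs = b"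
    using p unfolding is_path_def walk_wk by auto
  have len: "2 \<le> length xs"
  proof (rule ccontr)
    assume "\<not> 2 \<le> length xs"
    moreover have "xs \<noteq> []" using w by auto
    ultimately have "length xs = 1" by (cases xs) (auto simp: not_le)
    then obtain c where "xs = [c]" by (cases xs) auto
    with h l b show False by simp
  qed
  have "xs ! 0 = a" using h w by (metis hd_conv_nth wk_ne)
  then have e1: "(a, xs ! 1) \<in> E" using wk_nth[OF w, of 0] len by simp
  obtain w' where nb: "nbrs V E a = {w'}" using pendant_nbr[OF sg da] by blast
  have EV: "E \<subseteq> V \<times> V" using sg unfolding simple_graph_def by auto
  have "u \<in> nbrs V E a" "xs ! 1 \<in> nbrs V E a" using e e1 EV unfolding nbrs_def by auto
  with nb have "xs ! 1 = u" by auto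
  then have "u \<in> set xs" using len by (metis One_nat_def Suc_1 Suc_le_lessD nth_mem)
  with pendant_not_interior[OF sg du p] au b(3) show False by blast
qed

lemma hd_pendant:
  assumes tree: "is_tree V E" and w: "wk E xs" and d: "distinct xs" and len: "2 \<le> length xs"
  and noext: "\<And>y. (y, hd xs) \<in> E \<Longrightarrow> y \<in> set xs"
  shows "degree V E (hd xs) = 1"
proof -
  have sg: "simple_graph V E" and nc: "\<nexists>ys. is_cycle E ys" using tree unfolding is_tree_def by auto
  have sym: "sym E" and EV: "E \<subseteq> V \<times> V" and irr: "\<And>v. (v, v) \<notin> E"
    using sg unfolding simple_graph_def by auto
  have h0: "hd xs = xs ! 0" using w by (metis hd_conv_nth wk_ne)
  have e01: "(xs ! 0, xs ! 1) \<in> E" using wk_nth[OF w, of 0] len by simp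
  have "nbrs V E (hd xs) = {xs ! 1}"
  proof
    show "{xs ! 1} \<subseteq> nbrs V E (hd xs)" using e01 EV h0 unfolding nbrs_def by auto
    show "nbrs V E (hd xs) \<subseteq> {xs ! 1}"
    proof
      fix y assume "y \<in> nbrs V E (hd xs)"
      then have e: "(hd xs, y) \<in> E" unfolding nbrs_def by auto
      then have "(y, hd xs) \<in> E" using sym by (meson symD)
      then have "y \<in> set xs" by (rule noext)
      then obtain j where j: "j < length xs" "xs ! j = y" by (metis in_set_conv_nth)
      have "j \<noteq> 0"
      proof
        assume "j = 0"
        then have "(xs ! 0, xs ! 0) \<in> E" using j e h0 by simp
        with irr show False by blast
      qed
      moreover have "\<not> 2 \<le> j"
      proof
        assume j2: "2 \<le> j"
        let ?c = "take (Suc j) xs"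
        have "is_cycle E ?c" unfolding is_cycle_def walk_wk
        proof (intro conjI)
          show "wk E ?c" using wk_take[OF w] by simp
          show "distinct ?c" using d by simp
          show "3 \<le> length ?c" using j j2 by simp
          have "last ?c = y" using j by (simp add: take_Suc_conv_app_nth)
          moreover have "hd ?c = hd xs" using j w by (metis hd_take zero_less_Suc)
          ultimately show "(last ?c, hd ?c) \<in> E" using \<open>(y, hd xs) \<in> E\<close> by simp
        qed
        with nc show False by blast
      qed
      ultimately have "j = 1" by simp
      then show "y \<in> {xs ! 1}" using j by simp
    qed
  qed
  then show ?thesis unfolding degree_nbrs by simp
qed

lemma maxpath:
  assumes tree: "is_tree V E"
  and Qc: "\<And>xs y. Q xs \<Longrightarrow> Q (y # xs)" and Qs: "\<And>xs y. Q xs \<Longrightarrow> Q (xs @ [y])"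
  and w0: "wk E xs0" and d0: "distinct xs0" and l0: "2 \<le> length xs0" and q0: "Q xs0"
  shows "\<exists>xs. wk E xs \<and> distinct xs \<and> 2 \<le> length xs \<and> Q xs \<and> degree V E (hd xs) = 1 \<and> degree V E (last xs) = 1"
proof -
  have sg: "simple_graph V E" using tree unfolding is_tree_def by auto
  have sym: "sym E" and EV: "E \<subseteq> V \<times> V" and fin: "finite V"
    using sg unfolding simple_graph_def by auto
  define P where "P n = (\<exists>xs. length xs = n \<and> 2 \<le> n \<and> wk E xs \<and> distinct xs \<and> Q xs)" for n
  have P0: "P (length xs0)" unfolding P_def using w0 d0 l0 q0 by blast
  have bound: "n < Suc (card V)" if "P n" for n
  proof -
    from that obtain xs where xs: "length xs = n" "2 \<le> n" "wk E xs" "distinct xs" unfolding P_def by blast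
    have "xs ! 0 \<in> V" using wk_nth[OF xs(3), of 0] xs EV by auto
    then have "hd xs \<in> V" using xs(3) by (metis hd_conv_nth wk_ne)
    then have "set xs \<subseteq> V" using wk_set[OF xs(3) _ EV] by blast
    then have "card (set xs) \<le> card V" using fin card_mono by blast
    then show ?thesis using distinct_card[OF xs(4)] xs(1) by simp
  qed
  obtain n where n: "P n" and nmax: "\<And>m. P m \<Longrightarrow> m \<le> n"
    using ex_has_greatest_nat[of P "length xs0" "\<lambda>x. x" "Suc (card V)", OF P0] bound by blast
  from n obtain xs where xs: "length xs = n" "2 \<le> n" "wk E xs" "distinct xs" "Q xs" unfolding P_def by blast
  have ne: "xs \<noteq> []" using xs by auto
  have d1: "degree V E (hd xs) = 1"
  proof (rule hd_pendant[OF tree xs(3) xs(4)])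
    show "2 \<le> length xs" using xs by simp
    fix y assume e: "(y, hd xs) \<in> E"
    show "y \<in> set xs"
    proof (rule ccontr)
      assume "y \<notin> set xs"
      then have "P (Suc n)" unfolding P_def using xs e wk_Cons[OF xs(3) e] Qc[OF xs(5)]
        by (intro exI[of _ "y # xs"]) auto
      with nmax show False by fastforce
    qed
  qed
  have d2: "degree V E (hd (rev xs)) = 1"
  proof (rule hd_pendant[OF tree wk_rev[OF sym xs(3)]])
    show "distinct (rev xs)" using xs by simp
    show "2 \<le> length (rev xs)" using xs by simp
    fix y assume e: "(y, hd (rev xs)) \<in> E"
    then have e': "(last xs, y) \<in> E" using sym ne by (simp add: hd_rev symD)
    show "y \<in> set (rev xs)"
    proof (rule ccontr)
      assume "y \<notin> set (rev xs)"
      then have "P (Suc n)" unfolding P_def using xs e' wk_snoc[OF xs(3) e'] Qs[OF xs(5)]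
        by (intro exI[of _ "xs @ [y]"]) auto
      with nmax show False by fastforce
    qed
  qed
  have "hd (rev xs) = last xs" using ne by (simp add: hd_rev)
  then show ?thesis using xs d1 d2 by auto
qed

lemma path_verts_iff: "v \<in> path_verts E r s \<longleftrightarrow> (\<exists>xs. is_path E r s xs \<and> v \<in> set xs)"
  unfolding path_verts_def by blast

lemma path_edges_iff: "e \<in> path_edges E r s \<longleftrightarrow>
  (\<exists>xs i. is_path E r s xs \<and> Suc i < length xs \<and> (e = (xs ! i, xs ! Suc i) \<or> e = (xs ! Suc i, xs ! i)))"
  unfolding path_edges_def by blast

definition HVs :: "('a \<times> 'a) set \<Rightarrow> 'a set \<Rightarrow> 'a set" where
  "HVs E U = \<Union>{path_verts E r s | r s. r \<in> U \<and> s \<in> U \<and> r \<noteq> s}"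

definition HEs :: "('a \<times> 'a) set \<Rightarrow> 'a set \<Rightarrow> ('a \<times> 'a) set" where
  "HEs E U = \<Union>{path_edges E r s | r s. r \<in> U \<and> s \<in> U \<and> r \<noteq> s}"

lemma HVs_iff: "v \<in> HVs E U \<longleftrightarrow> (\<exists>r s xs. r \<in> U \<and> s \<in> U \<and> r \<noteq> s \<and> is_path E r s xs \<and> v \<in> set xs)"
proof
  assume "v \<in> HVs E U"
  then obtain r s where "r \<in> U" "s \<in> U" "r \<noteq> s" "v \<in> path_verts E r s" unfolding HVs_def by blast
  then show "\<exists>r s xs. r \<in> U \<and> s \<in> U \<and> r \<noteq> s \<and> is_path E r s xs \<and> v \<in> set xs"
    using path_verts_iff by metis
next
  assume "\<exists>r s xs. r \<in> U \<and> s \<in> U \<and> r \<noteq> s \<and> is_path E r s xs \<and> v \<in> set xs"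
  then obtain r s xs where rs: "r \<in> U" "s \<in> U" "r \<noteq> s" "is_path E r s xs" "v \<in> set xs" by blast
  then have "v \<in> path_verts E r s" using path_verts_iff by metis
  then show "v \<in> HVs E U" unfolding HVs_def using rs by blast
qed

lemma HEs_iff: "e \<in> HEs E U \<longleftrightarrow> (\<exists>r s xs i. r \<in> U \<and> s \<in> U \<and> r \<noteq> s \<and> is_path E r s xs \<and> Suc i < length xs
   \<and> (e = (xs ! i, xs ! Suc i) \<or> e = (xs ! Suc i, xs ! i)))"
proof
  assume "e \<in> HEs E U"
  then obtain r s where "r \<in> U" "s \<in> U" "r \<noteq> s" "e \<in> path_edges E r s" unfolding HEs_def by blast
  then show "\<exists>r s xs i. r \<in> U \<and> s \<in> U \<and> r \<noteq> s \<and> is_path E r s xs \<and> Suc i < length xs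
   \<and> (e = (xs ! i, xs ! Suc i) \<or> e = (xs ! Suc i, xs ! i))"
    using path_edges_iff by metis
next
  assume "\<exists>r s xs i. r \<in> U \<and> s \<in> U \<and> r \<noteq> s \<and> is_path E r s xs \<and> Suc i < length xs
   \<and> (e = (xs ! i, xs ! Suc i) \<or> e = (xs ! Suc i, xs ! i))"
  then obtain r s xs i where rs: "r \<in> U" "s \<in> U" "r \<noteq> s" "is_path E r s xs" "Suc i < length xs"
   "e = (xs ! i, xs ! Suc i) \<or> e = (xs ! Suc i, xs ! i)" by blast
  then have "e \<in> path_edges E r s" using path_edges_iff by metis
  then show "e \<in> HEs E U" unfolding HEs_def using rs by blast
qed

lemma path_set_sub: "simple_graph V E \<Longrightarrow> is_path E r s xs \<Longrightarrow> r \<in> V \<Longrightarrow> set xs \<subseteq> V"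
  unfolding is_path_def walk_wk simple_graph_def using wk_set by blast

lemma H_simple:
  assumes sg: "simple_graph V E" and UV: "U \<subseteq> V"
  shows "HVs E U \<subseteq> V" "HEs E U \<subseteq> E" "simple_graph (HVs E U) (HEs E U)"
proof -
  have sym: "sym E" and EV: "E \<subseteq> V \<times> V" and fin: "finite V" and irr: "\<And>v. (v, v) \<notin> E"
    using sg unfolding simple_graph_def by auto
  show HV: "HVs E U \<subseteq> V"
  proof
    fix v assume "v \<in> HVs E U"
    then obtain r s xs where "r \<in> U" "is_path E r s xs" "v \<in> set xs" unfolding HVs_iff by blast
    then show "v \<in> V" using path_set_sub[OF sg] UV by blast
  qed
  show HE: "HEs E U \<subseteq> E"
  proof
    fix e assume "e \<in> HEs E U"
    then obtain r s xs i where "is_path E r s xs" "Suc i < length xs" "e = (xs ! i, xs ! Suc i) \<or> e = (xs ! Suc i, xs ! i)"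
      unfolding HEs_iff by blast
    moreover then have "(xs ! i, xs ! Suc i) \<in> E" unfolding is_path_def walk_wk using wk_nth by blast
    ultimately show "e \<in> E" using sym by (auto dest: symD)
  qed
  have "HEs E U \<subseteq> HVs E U \<times> HVs E U"
  proof
    fix e assume "e \<in> HEs E U"
    then obtain r s xs i where "r \<in> U" "s \<in> U" "r \<noteq> s" "is_path E r s xs" "Suc i < length xs" "e = (xs ! i, xs ! Suc i) \<or> e = (xs ! Suc i, xs ! i)"
      unfolding HEs_iff by blast
    moreover then have "xs ! i \<in> set xs" "xs ! Suc i \<in> set xs" by auto
    ultimately have "xs ! i \<in> HVs E U" "xs ! Suc i \<in> HVs E U" using HVs_iff by metis+
    then show "e \<in> HVs E U \<times> HVs E U" using \<open>e = (xs ! i, xs ! Suc i) \<or> e = (xs ! Suc i, xs ! i)\<close> by auto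
  qed
  moreover have "sym (HEs E U)" unfolding sym_def HEs_iff by blast
  ultimately show "simple_graph (HVs E U) (HEs E U)"
    using HV HE fin irr unfolding simple_graph_def by (auto intro: finite_subset)
qed

lemma path_ends_neq:
  assumes "wk E xs" "distinct xs" "2 \<le> length xs"
  shows "hd xs \<noteq> last xs"
proof -
  have "xs \<noteq> []" using assms by auto
  then have "hd xs = xs ! 0" "last xs = xs ! (length xs - 1)" by (auto simp: hd_conv_nth last_conv_nth)
  moreover have "xs ! 0 \<noteq> xs ! (length xs - 1)" using assms by (subst nth_eq_iff_index_eq) auto
  ultimately show ?thesis by simp
qed

lemma H_base:
  assumes tree: "is_tree V E" and UP: "U \<subseteq> pendant_vertices V E" and PU: "pendant_vertices V E \<subseteq> U"
  and U2: "2 \<le> card U"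
  shows "HVs E U = V" "HEs E U = E"
proof -
  have sg: "simple_graph V E" and con: "connected_graph V E" using tree unfolding is_tree_def by auto
  have UV: "U \<subseteq> V" using UP unfolding pendant_vertices_def by auto
  have sym: "sym E" and EV: "E \<subseteq> V \<times> V" using sg unfolding simple_graph_def by auto
  note HS = H_simple[OF sg UV]
  have key: "\<exists>xs. is_path E (hd xs) (last xs) xs \<and> hd xs \<in> U \<and> last xs \<in> U \<and> hd xs \<noteq> last xs \<and> Q xs"
    if Qc: "\<And>xs y. Q xs \<Longrightarrow> Q (y # xs)" and Qs: "\<And>xs y. Q xs \<Longrightarrow> Q (xs @ [y])"
    and w0: "wk E xs0" and d0: "distinct xs0" and l0: "2 \<le> length xs0" and q0: "Q xs0" for Q xs0
  proof -
    obtain xs where xs: "wk E xs" "distinct xs" "2 \<le> length xs" "Q xs" "degree V E (hd xs) = 1" "degree V E (last xs) = 1"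
      using maxpath[OF tree, of Q, OF Qc Qs w0 d0 l0 q0] by blast
    have xne: "xs \<noteq> []" using xs(1) by auto
    have "xs ! 0 \<in> V" using wk_nth[OF xs(1), of 0] xs(3) EV by auto
    then have hV: "hd xs \<in> V" using xne by (simp add: hd_conv_nth)
    then have "set xs \<subseteq> V" using wk_set[OF xs(1) _ EV] by blast
    then have "hd xs \<in> V" "last xs \<in> V" using hV xne by auto
    then have "hd xs \<in> U" "last xs \<in> U" using xs PU unfolding pendant_vertices_def by auto
    moreover have "is_path E (hd xs) (last xs) xs" unfolding is_path_def walk_wk using xs by simp
    ultimately show ?thesis using path_ends_neq[OF xs(1-3)] xs(4) by blast
  qed
  show "HVs E U = V"
  proof
    show "V \<subseteq> HVs E U"
    proof
      fix v assume v: "v \<in> V"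
      have "\<exists>s. s \<in> U \<and> s \<noteq> v"
      proof (rule ccontr)
        assume "\<not> (\<exists>s. s \<in> U \<and> s \<noteq> v)"
        then have "U \<subseteq> {v}" by auto
        then have "card U \<le> card {v}" by (intro card_mono) auto
        then have "card U \<le> 1" by simp
        with U2 show False by simp
      qed
      then obtain s where s: "s \<in> U" "s \<noteq> v" by blast
      then obtain xs0 where p0: "is_path E v s xs0" using con v UV unfolding connected_graph_def by blast
      have w0: "wk E xs0" and d0: "distinct xs0" using p0 unfolding is_path_def walk_wk by auto
      have l0: "2 \<le> length xs0"
      proof (rule ccontr)
        assume "\<not> 2 \<le> length xs0"
        then have "length xs0 = 1" using w0 by (cases xs0) (auto simp: not_le)
        then obtain c where "xs0 = [c]" by (metis One_nat_def length_0_conv length_Suc_conv)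
        with p0 s show False unfolding is_path_def by auto
      qed
      have q0: "v \<in> set xs0" using p0 w0 unfolding is_path_def by (metis hd_in_set wk_ne)
      from key[of "\<lambda>xs. v \<in> set xs", OF _ _ w0 d0 l0 q0]
      show "v \<in> HVs E U" unfolding HVs_iff by auto
    qed
  qed (rule HS(1))
  show "HEs E U = E"
  proof
    show "E \<subseteq> HEs E U"
    proof
      fix e assume e: "e \<in> E"
      obtain a b where ab: "e = (a, b)" by (cases e)
      let ?Q = "\<lambda>xs. \<exists>i. Suc i < length xs \<and> xs ! i = a \<and> xs ! Suc i = b"
      have Qc: "?Q (y # xs)" if "?Q xs" for xs y
        using that by (metis Suc_less_eq length_Cons nth_Cons_Suc)
      have Qs: "?Q (xs @ [y])" if "?Q xs" for xs y
        using that by (metis Suc_lessD length_append_singleton less_SucI nth_append)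
      have ne: "a \<noteq> b" using e ab sg unfolding simple_graph_def by auto
      have w0: "wk E [a, b]" using e ab by simp
      from key[of ?Q "[a, b]", OF Qc Qs w0] ne
      obtain xs i where "is_path E (hd xs) (last xs) xs" "hd xs \<in> U" "last xs \<in> U" "hd xs \<noteq> last xs"
        "Suc i < length xs" "xs ! i = a" "xs ! Suc i = b" by fastforce
      then show "e \<in> HEs E U" unfolding HEs_iff ab by blast
    qed
  qed (rule HS(2))
qed

definition eig :: "'a set \<Rightarrow> ('a \<times> 'a) set \<Rightarrow> ('a \<Rightarrow> 'b::field) \<Rightarrow> bool" where
  "eig V E x \<longleftrightarrow> (\<forall>v\<in>V. of_nat (degree V E v) * x v - sum x (nbrs V E v) = x v)"

lemma H_rm:
  assumes sg: "simple_graph V E" and du: "degree V E u = 1" and uU: "u \<notin> U"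
  shows "HVs (rmE E u) U = HVs E U" "HEs (rmE E u) U = HEs E U"
proof -
  have pv: "path_verts (rmE E u) r s = path_verts E r s" if "r \<in> U" "s \<in> U" for r s
  proof -
    have "\<And>xs. is_path (rmE E u) r s xs = is_path E r s xs" using path_rm_iff[OF sg du, of r s] that uU by blast
    then show ?thesis unfolding path_verts_def by simp
  qed
  have pe: "path_edges (rmE E u) r s = path_edges E r s" if "r \<in> U" "s \<in> U" for r s
  proof -
    have "\<And>xs. is_path (rmE E u) r s xs = is_path E r s xs" using path_rm_iff[OF sg du, of r s] that uU by blast
    then show ?thesis unfolding path_edges_def by simp
  qed
  have "{path_verts (rmE E u) r s | r s. r \<in> U \<and> s \<in> U \<and> r \<noteq> s} = {path_verts E r s | r s. r \<in> U \<and> s \<in> U \<and> r \<noteq> s}"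
    using pv by blast
  then show "HVs (rmE E u) U = HVs E U" unfolding HVs_def by simp
  have "{path_edges (rmE E u) r s | r s. r \<in> U \<and> s \<in> U \<and> r \<noteq> s} = {path_edges E r s | r s. r \<in> U \<and> s \<in> U \<and> r \<noteq> s}"
    using pe by blast
  then show "HEs (rmE E u) U = HEs E U" unfolding HEs_def by simp
qed

lemma comb_main:
  "card V = N \<Longrightarrow> is_tree V E \<Longrightarrow> U \<subseteq> pendant_vertices V E \<Longrightarrow> 2 \<le> card U \<Longrightarrow> eig V E (x :: 'a \<Rightarrow> 'b::field)
   \<Longrightarrow> (\<forall>u\<in>pendant_vertices V E - U. x u = 0)
   \<Longrightarrow> (\<forall>v\<in>V - HVs E U. x v = 0) \<and> eig (HVs E U) (HEs E U) x"
proof (induct N arbitrary: V E rule: less_induct)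
  case (less N V E)
  have tree: "is_tree V E" and UP: "U \<subseteq> pendant_vertices V E" and U2: "2 \<le> card U"
    and ev: "eig V E x" and hyp: "\<forall>u\<in>pendant_vertices V E - U. x u = 0" using less.prems by auto
  have sg: "simple_graph V E" using tree unfolding is_tree_def by auto
  have sym: "sym E" and EV: "E \<subseteq> V \<times> V" and fin: "finite V" using sg unfolding simple_graph_def by auto
  have UV: "U \<subseteq> V" using UP unfolding pendant_vertices_def by auto
  have finU: "finite U" using UV fin finite_subset by blast
  have other: "\<exists>c\<in>U. c \<noteq> b" for b
  proof (rule ccontr)
    assume "\<not> (\<exists>c\<in>U. c \<noteq> b)"
    then have "U \<subseteq> {b}" by auto
    then have "card U \<le> card {b}" by (intro card_mono) auto
    with U2 show False by simp
  qed
  show ?case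
  proof (cases "pendant_vertices V E \<subseteq> U")
    case True
    from H_base[OF tree UP True U2] show ?thesis using ev by simp
  next
    case False
    then obtain u where u: "u \<in> pendant_vertices V E" "u \<notin> U" by blast
    have uV: "u \<in> V" and du: "degree V E u = 1" using u unfolding pendant_vertices_def by auto
    obtain w where nw: "nbrs V E u = {w}" using pendant_nbr[OF sg du] by blast
    have xu: "x u = 0" using hyp u by blast
    have "of_nat (degree V E u) * x u - sum x (nbrs V E u) = x u" using ev uV unfolding eig_def by blast
    then have xw: "x w = 0" using nw du by simp
    have wV: "w \<in> V" and uw: "(u, w) \<in> E" using nw unfolding nbrs_def by auto
    have wu: "(w, u) \<in> E" using uw sym by (meson symD)
    have wneq: "w \<noteq> u" using uw sg unfolding simple_graph_def by auto
    have onlyw: "v = w" if "(v, u) \<in> E" for v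
    proof -
      have "(u, v) \<in> E" using that sym by (meson symD)
      then have "v \<in> nbrs V E u" using EV unfolding nbrs_def by auto
      with nw show ?thesis by simp
    qed
    obtain a where a: "a \<in> U" using other by blast
    have aV: "a \<in> V" "a \<noteq> u" using a UV u by auto
    define V' where "V' = V - {u}"
    define E' where "E' = rmE E u"
    have tree': "is_tree V' E'" unfolding V'_def E'_def by (rule tree_rm[OF tree du aV])
    have "0 < card V" using fin uV card_gt_0_iff by blast
    then have card': "card V' < N" unfolding V'_def using less.prems(1) fin uV by simp
    have nb': "nbrs V' E' v = nbrs V E v - {u}" if "v \<noteq> u" for v
      unfolding V'_def E'_def using nbrs_rm[OF that] .
    have nb_same: "nbrs V' E' v = nbrs V E v" if "v \<noteq> u" "v \<noteq> w" for v
    proof -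
      have "u \<notin> nbrs V E v" using onlyw that unfolding nbrs_def by auto
      then show ?thesis using nb'[OF that(1)] by simp
    qed
    have UP': "U \<subseteq> pendant_vertices V' E'"
    proof
      fix b assume b: "b \<in> U"
      have bV: "b \<in> V" "b \<noteq> u" using b UV u by auto
      have db: "degree V E b = 1" using b UP unfolding pendant_vertices_def by auto
      obtain c where c: "c \<in> U" "c \<noteq> b" using other by blast
      have cV: "c \<in> V" "c \<noteq> u" using c UV u by auto
      have "(b, u) \<notin> E" by (rule pendant_not_adj[OF tree db du cV(1) c(2) cV(2) bV])
      then have "u \<notin> nbrs V E b" unfolding nbrs_def by auto
      then have "nbrs V' E' b = nbrs V E b" using nb'[OF bV(2)] by simp
      then show "b \<in> pendant_vertices V' E'" using db bV unfolding pendant_vertices_def degree_nbrs V'_def by auto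
    qed
    have finN: "finite (nbrs V E v)" for v using sg_finite_nbrs[OF sg] .
    have ev': "eig V' E' x" unfolding eig_def
    proof
      fix v assume v: "v \<in> V'"
      then have vu: "v \<noteq> u" "v \<in> V" unfolding V'_def by auto
      have eqv: "of_nat (degree V E v) * x v - sum x (nbrs V E v) = x v" using ev vu unfolding eig_def by blast
      show "of_nat (degree V' E' v) * x v - sum x (nbrs V' E' v) = x v"
      proof (cases "v = w")
        case True
        have uin: "u \<in> nbrs V E w" using wu uV unfolding nbrs_def by auto
        have "sum x (nbrs V' E' w) = sum x (nbrs V E w) - x u"
          using nb'[OF wneq] sum_diff1[OF finN[of w], of x u] uin by simp
        moreover have "sum x (nbrs V E w) = 0" using eqv True xw by simp
        ultimately show ?thesis using True xw xu by simp
      next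
        case False
        then show ?thesis using eqv nb_same[OF vu(1) False] unfolding degree_nbrs by simp
      qed
    qed
    have hyp': "\<forall>v\<in>pendant_vertices V' E' - U. x v = 0"
    proof
      fix v assume v: "v \<in> pendant_vertices V' E' - U"
      then have vu: "v \<noteq> u" "v \<in> V" "v \<notin> U" and d: "degree V' E' v = 1"
        unfolding pendant_vertices_def V'_def by auto
      show "x v = 0"
      proof (cases "v = w")
        case True then show ?thesis using xw by simp
      next
        case False
        then have "degree V E v = 1" using d nb_same[OF vu(1) False] unfolding degree_nbrs by simp
        then show ?thesis using hyp vu unfolding pendant_vertices_def by blast
      qed
    qed
    have IH: "(\<forall>v\<in>V' - HVs E' U. x v = 0) \<and> eig (HVs E' U) (HEs E' U) x"
      using less.hyps[OF card' refl tree' UP' U2 ev' hyp'] .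
    have HH: "HVs E' U = HVs E U" "HEs E' U = HEs E U" unfolding E'_def using H_rm[OF sg du u(2)] by auto
    show ?thesis
    proof
      show "\<forall>v\<in>V - HVs E U. x v = 0" using IH HH xu unfolding V'_def by auto
      show "eig (HVs E U) (HEs E U) x" using IH HH by simp
    qed
  qed
qed


lemma vlist: "finite V \<Longrightarrow> distinct (vlist V) \<and> set (vlist V) = V"
proof -
  assume "finite V"
  then obtain xs where "set xs = V \<and> distinct xs" using finite_distinct_list by blast
  then have "distinct xs \<and> set xs = V" by blast
  then show ?thesis unfolding vlist_def by (rule someI)
qed

lemma vlist_len: "finite V \<Longrightarrow> length (vlist V) = card V"
  using vlist distinct_card by metis

definition idx :: "'a set \<Rightarrow> 'a \<Rightarrow> nat" where
  "idx V a = (THE i. i < card V \<and> vlist V ! i = a)"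

lemma idx:
  assumes fin: "finite V" and a: "a \<in> V"
  shows "idx V a < card V" "vlist V ! idx V a = a"
proof -
  have d: "distinct (vlist V)" and s: "set (vlist V) = V" using vlist[OF fin] by auto
  have l: "length (vlist V) = card V" using vlist_len[OF fin] .
  obtain i where i: "i < card V" "vlist V ! i = a" using a s l by (metis in_set_conv_nth)
  have "\<exists>!i. i < card V \<and> vlist V ! i = a"
    using i d l by (metis nth_eq_iff_index_eq)
  then have "idx V a < card V \<and> vlist V ! idx V a = a" unfolding idx_def by (rule theI')
  then show "idx V a < card V" "vlist V ! idx V a = a" by auto
qed

lemma idx_nth:
  assumes fin: "finite V" and i: "i < card V"
  shows "idx V (vlist V ! i) = i"
proof -
  have d: "distinct (vlist V)" and s: "set (vlist V) = V" using vlist[OF fin] by auto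
  have l: "length (vlist V) = card V" using vlist_len[OF fin] .
  have a: "vlist V ! i \<in> V" using i s l by (metis nth_mem)
  show ?thesis using idx[OF fin a] i d l by (metis nth_eq_iff_index_eq)
qed

lemma vlist_nth_in: "finite V \<Longrightarrow> i < card V \<Longrightarrow> vlist V ! i \<in> V"
  using vlist vlist_len by (metis nth_mem)

definition fun_of :: "'a set \<Rightarrow> 'b::zero vec \<Rightarrow> 'a \<Rightarrow> 'b" where
  "fun_of V v a = (if a \<in> V then v $ idx V a else 0)"

lemma fun_of_nth: "finite V \<Longrightarrow> i < card V \<Longrightarrow> fun_of V v (vlist V ! i) = v $ i"
  unfolding fun_of_def using idx_nth vlist_nth_in by metis

lemma sum_vlist:
  assumes fin: "finite V"
  shows "(\<Sum>i = 0..<card V. g (vlist V ! i)) = (\<Sum>a\<in>V. g a)"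
proof -
  have d: "distinct (vlist V)" and s: "set (vlist V) = V" using vlist[OF fin] by auto
  have l: "length (vlist V) = card V" using vlist_len[OF fin] .
  have inj: "inj_on (\<lambda>i. vlist V ! i) {0..<card V}" using d l by (simp add: inj_on_nth)
  have "(\<lambda>i. vlist V ! i) ` {0..<card V} = set (vlist V)" using l by (auto simp: set_conv_nth)
  then have img: "(\<lambda>i. vlist V ! i) ` {0..<card V} = V" using s by simp
  show ?thesis using sum.reindex[OF inj, of g] img by simp
qed

definition BL :: "'a set \<Rightarrow> ('a \<times> 'a) set \<Rightarrow> complex mat" where
  "BL V E = char_matrix (map_mat complex_of_real (laplacian V E)) 1"

lemma laplacian_carrier: "laplacian V E \<in> carrier_mat (card V) (card V)"
  unfolding laplacian_def by simp

lemma BL_carrier: "BL V E \<in> carrier_mat (card V) (card V)"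
  unfolding BL_def char_matrix_def laplacian_def by simp

lemma BL_entry:
  assumes "i < card V" "j < card V"
  shows "BL V E $$ (i, j) = complex_of_real (laplacian V E $$ (i, j)) - (if i = j then 1 else 0)"
  using assms unfolding BL_def char_matrix_def laplacian_def by simp

lemma BL_mult:
  assumes sg: "simple_graph V E" and v: "v \<in> carrier_vec (card V)" and i: "i < card V"
  shows "(BL V E *\<^sub>v v) $ i = of_nat (degree V E (vlist V ! i)) * fun_of V v (vlist V ! i)
            - sum (fun_of V v) (nbrs V E (vlist V ! i)) - fun_of V v (vlist V ! i)"
proof -
  have fin: "finite V" and irr: "\<And>a. (a, a) \<notin> E" and EV: "E \<subseteq> V \<times> V"
    using sg unfolding simple_graph_def by auto
  have d: "distinct (vlist V)" using vlist[OF fin] by auto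
  have l: "length (vlist V) = card V" using vlist_len[OF fin] .
  define a where "a = vlist V ! i"
  define x where "x = fun_of V v"
  have aV: "a \<in> V" unfolding a_def using vlist_nth_in[OF fin i] .
  define g where "g b = ((if b = a then of_nat (degree V E a) else if (a, b) \<in> E then -1 else 0) - (if b = a then 1 else 0)) * x b" for b
  have "(BL V E *\<^sub>v v) $ i = row (BL V E) i \<bullet> v" using BL_carrier[of V E] i by simp
  also have "\<dots> = (\<Sum>j = 0..<card V. BL V E $$ (i, j) * v $ j)"
    using v BL_carrier[of V E] i by (simp add: scalar_prod_def)
  also have "\<dots> = (\<Sum>j = 0..<card V. g (vlist V ! j))"
  proof (rule sum.cong[OF refl])
    fix j assume j: "j \<in> {0..<card V}"
    have eq: "(i = j) = (vlist V ! i = vlist V ! j)" using d l i j by (simp add: nth_eq_iff_index_eq)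
    have "v $ j = x (vlist V ! j)" unfolding x_def using fun_of_nth[OF fin, of j v] j by simp
    moreover have "BL V E $$ (i, j) = complex_of_real (laplacian V E $$ (i, j)) - (if i = j then 1 else 0)"
      using BL_entry[OF i, of j E] j by simp
    ultimately show "BL V E $$ (i, j) * v $ j = g (vlist V ! j)"
      unfolding g_def using j i eq
      by (auto simp: laplacian_def a_def)
  qed
  also have "\<dots> = (\<Sum>b\<in>V. g b)" by (rule sum_vlist[OF fin])
  also have "\<dots> = (\<Sum>b\<in>V. (if b = a then (of_nat (degree V E a) - 1) * x a else 0) - (if b \<in> nbrs V E a then x b else 0))"
  proof (rule sum.cong[OF refl])
    fix b assume b: "b \<in> V"
    show "g b = (if b = a then (of_nat (degree V E a) - 1) * x a else 0) - (if b \<in> nbrs V E a then x b else 0)"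
      unfolding g_def nbrs_def using b irr[of a] by (auto simp: algebra_simps)
  qed
  also have "\<dots> = (of_nat (degree V E a) - 1) * x a - sum x (nbrs V E a)"
  proof -
    have N: "nbrs V E a \<subseteq> V" unfolding nbrs_def by auto
    have "(\<Sum>b\<in>V. if b \<in> nbrs V E a then x b else 0) = sum x (nbrs V E a)"
      using sum.inter_restrict[OF fin, of x "nbrs V E a", symmetric] N
      by (simp add: Int_absorb1 Int_commute)
    then show ?thesis using aV fin by (simp add: sum_subtractf)
  qed
  finally show ?thesis unfolding a_def x_def by (simp add: algebra_simps)
qed

lemma ker_BL_iff:
  assumes sg: "simple_graph V E" and v: "v \<in> carrier_vec (card V)"
  shows "v \<in> mat_kernel (BL V E) \<longleftrightarrow> eig V E (fun_of V v)"
proof -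
  have fin: "finite V" using sg unfolding simple_graph_def by auto
  have "v \<in> mat_kernel (BL V E) \<longleftrightarrow> (\<forall>i < card V. (BL V E *\<^sub>v v) $ i = 0)"
    using v BL_carrier[of V E] unfolding mat_kernel_def by (auto simp: vec_eq_iff)
  also have "\<dots> \<longleftrightarrow> (\<forall>a\<in>V. of_nat (degree V E a) * fun_of V v a - sum (fun_of V v) (nbrs V E a) - fun_of V v a = 0)"
  proof
    assume L: "\<forall>i < card V. (BL V E *\<^sub>v v) $ i = 0"
    show "\<forall>a\<in>V. of_nat (degree V E a) * fun_of V v a - sum (fun_of V v) (nbrs V E a) - fun_of V v a = 0"
    proof
      fix a assume a: "a \<in> V"
      have "(BL V E *\<^sub>v v) $ idx V a = 0" using L idx(1)[OF fin a] by blast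
      then show "of_nat (degree V E a) * fun_of V v a - sum (fun_of V v) (nbrs V E a) - fun_of V v a = 0"
        unfolding BL_mult[OF sg v idx(1)[OF fin a]] idx(2)[OF fin a] .
    qed
  next
    assume R: "\<forall>a\<in>V. of_nat (degree V E a) * fun_of V v a - sum (fun_of V v) (nbrs V E a) - fun_of V v a = 0"
    show "\<forall>i < card V. (BL V E *\<^sub>v v) $ i = 0"
    proof (intro allI impI)
      fix i assume i: "i < card V"
      show "(BL V E *\<^sub>v v) $ i = 0" unfolding BL_mult[OF sg v i] using R vlist_nth_in[OF fin i] by blast
    qed
  qed
  also have "\<dots> \<longleftrightarrow> eig V E (fun_of V v)" unfolding eig_def by simp
  finally show ?thesis .
qed

definition sel :: "'a set \<Rightarrow> 'a set \<Rightarrow> complex mat" where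
  "sel W V = mat (card W) (card V) (\<lambda>(k, i). if vlist V ! i = vlist W ! k then 1 else 0)"

lemma sel_carrier: "sel W V \<in> carrier_mat (card W) (card V)"
  unfolding sel_def by simp

lemma sel_mult:
  assumes fin: "finite V" and WV: "W \<subseteq> V" and v: "v \<in> carrier_vec (card V)" and k: "k < card W"
  shows "(sel W V *\<^sub>v v) $ k = fun_of V v (vlist W ! k)"
proof -
  have finW: "finite W" using fin WV finite_subset by blast
  define c where "c = vlist W ! k"
  have cV: "c \<in> V" unfolding c_def using vlist_nth_in[OF finW k] WV by blast
  have "(sel W V *\<^sub>v v) $ k = row (sel W V) k \<bullet> v" using sel_carrier[of W V] k by simp
  also have "\<dots> = (\<Sum>i = 0..<card V. (if vlist V ! i = c then 1 else 0) * v $ i)"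
    using v sel_carrier[of W V] k by (simp add: scalar_prod_def sel_def c_def)
  also have "\<dots> = (\<Sum>i = 0..<card V. (\<lambda>b. if b = c then fun_of V v b else 0) (vlist V ! i))"
    by (rule sum.cong[OF refl], auto simp: fun_of_nth[OF fin])
  also have "\<dots> = (\<Sum>b\<in>V. if b = c then fun_of V v b else 0)" by (rule sum_vlist[OF fin])
  also have "\<dots> = fun_of V v c" using fin cV by simp
  finally show ?thesis unfolding c_def .
qed

lemma sel_fun_of:
  assumes fin: "finite V" and WV: "W \<subseteq> V" and v: "v \<in> carrier_vec (card V)" and a: "a \<in> W"
  shows "fun_of W (sel W V *\<^sub>v v) a = fun_of V v a"
proof -
  have finW: "finite W" using fin WV finite_subset by blast
  show ?thesis unfolding fun_of_def[of W] using a sel_mult[OF fin WV v idx(1)[OF finW a]] idx(2)[OF finW a] by simp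
qed

lemma eig_cong: "(\<And>a. a \<in> V \<Longrightarrow> x a = y a) \<Longrightarrow> eig V E x = eig V E y"
proof -
  assume xy: "\<And>a. a \<in> V \<Longrightarrow> x a = y a"
  have "sum x (nbrs V E a) = sum y (nbrs V E a)" for a
    by (rule sum.cong[OF refl], insert xy, auto simp: nbrs_def)
  then show ?thesis unfolding eig_def using xy by auto
qed

lemma vec_zero_fun_of:
  fixes v :: "complex vec"
  assumes fin: "finite V" and v: "v \<in> carrier_vec (card V)" and z: "\<And>a. a \<in> V \<Longrightarrow> fun_of V v a = 0"
  shows "v = 0\<^sub>v (card V)"
proof (rule eq_vecI)
  fix i assume "i < dim_vec (0\<^sub>v (card V) :: complex vec)"
  then have i: "i < card V" by simp
  show "v $ i = 0\<^sub>v (card V) $ i" using fun_of_nth[OF fin i, of v] z[OF vlist_nth_in[OF fin i]] i by simp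
qed (insert v, simp)

lemma BL_herm:
  assumes sg: "simple_graph V E" and i: "i < card V" and j: "j < card V"
  shows "BL V E $$ (i, j) = cnj (BL V E $$ (j, i))"
proof -
  have sym: "sym E" using sg unfolding simple_graph_def by auto
  have "laplacian V E $$ (i, j) = laplacian V E $$ (j, i)"
    using i j sym unfolding laplacian_def by (auto dest: symD)
  moreover have "BL V E $$ (i, j) = complex_of_real (laplacian V E $$ (i, j)) - (if i = j then 1 else 0)"
    by (rule BL_entry[OF i j])
  moreover have "BL V E $$ (j, i) = complex_of_real (laplacian V E $$ (j, i)) - (if j = i then 1 else 0)"
    by (rule BL_entry[OF j i])
  ultimately show ?thesis by simp
qed

lemma lap_mult_eq:
  assumes sg: "simple_graph V E"
  shows "lap_mult V E 1 = kernel_dim (BL V E)"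
proof -
  let ?A = "map_mat complex_of_real (laplacian V E)"
  have A: "?A \<in> carrier_mat (card V) (card V)" using laplacian_carrier[of V E] by simp
  have K: "mat_kernel (char_matrix ?A 1 * char_matrix ?A 1) = mat_kernel (char_matrix ?A 1)"
    using herm_kernel_sq[OF BL_carrier BL_herm[OF sg]] unfolding BL_def .
  have "lap_mult V E 1 = Polynomial.order 1 (char_poly ?A)"
    unfolding lap_mult_def by (rule order_real_complex[OF laplacian_carrier[of V E]])
  also have "\<dots> = kernel_dim (BL V E)" unfolding BL_def by (rule alg_eq_geo[OF A K])
  finally show ?thesis .
qed

lemma lap_mult_ge:
  shows "kernel_dim (BL V E) \<le> lap_mult V E 1"
proof -
  let ?A = "map_mat complex_of_real (laplacian V E)"
  have A: "?A \<in> carrier_mat (card V) (card V)" using laplacian_carrier[of V E] by simp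
  have "kernel_dim (BL V E) \<le> Polynomial.order 1 (char_poly ?A)" unfolding BL_def by (rule geo_le_alg[OF A])
  also have "\<dots> = lap_mult V E 1"
    unfolding lap_mult_def by (rule order_real_complex[OF laplacian_carrier[of V E], symmetric])
  finally show ?thesis .
qed


theorem mainTheorem11:
  fixes V :: "'a set" and E :: "('a \<times> 'a) set" and u1 u2 u3 u4 :: 'a
  assumes tree: "is_tree V E"
    and p4: "card (pendant_vertices V E) \<ge> 4"
    and pend: "u1 \<in> pendant_vertices V E" "u2 \<in> pendant_vertices V E"
              "u3 \<in> pendant_vertices V E" "u4 \<in> pendant_vertices V E"
    and dist: "distinct [u1, u2, u3, u4]"
    and mult: "int (lap_mult V E 1) \<ge> int (card (pendant_vertices V E)) - 2"
  shows "lap_mult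
           (\<Union>{path_verts E r s | r s. r \<in> {u1, u2, u3, u4} \<and> s \<in> {u1, u2, u3, u4} \<and> r \<noteq> s})
           (\<Union>{path_edges E r s | r s. r \<in> {u1, u2, u3, u4} \<and> s \<in> {u1, u2, u3, u4} \<and> r \<noteq> s})
           1 \<ge> 2"
proof -
  define U where "U = {u1, u2, u3, u4}"
  define P where "P = pendant_vertices V E"
  define U' where "U' = P - U"
  define HV where "HV = HVs E U"
  define HE where "HE = HEs E U"
  have goal: "?thesis = (2 \<le> lap_mult HV HE 1)" unfolding HV_def HE_def HVs_def HEs_def U_def ..
  have sg: "simple_graph V E" using tree unfolding is_tree_def by auto
  have fin: "finite V" using sg unfolding simple_graph_def by auto
  have UP: "U \<subseteq> P" unfolding U_def P_def using pend by auto
  have PV: "P \<subseteq> V" unfolding P_def pendant_vertices_def by auto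
  have UV: "U \<subseteq> V" using UP PV by auto
  have finP: "finite P" using PV fin finite_subset by blast
  have cU: "card U = 4" unfolding U_def using dist by simp
  have cU': "card U' = card P - 4" unfolding U'_def using card_Diff_subset[OF _ UP] cU finP finite_subset[OF UP finP] by simp
  have U'V: "U' \<subseteq> V" unfolding U'_def using PV by auto
  note HS = H_simple[OF sg UV]
  have sgH: "simple_graph HV HE" unfolding HV_def HE_def using HS(3) .
  have HVV: "HV \<subseteq> V" unfolding HV_def using HS(1) .
  let ?n = "card V" and ?h = "card HV" and ?r = "card U'"
  define BT where "BT = BL V E"
  define BH where "BH = BL HV HE"
  define Em where "Em = sel U' V"
  define R where "R = sel HV V"
  define S where "S = BT @\<^sub>r Em"
  have BT: "BT \<in> carrier_mat ?n ?n" unfolding BT_def by (rule BL_carrier)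
  have BH: "BH \<in> carrier_mat ?h ?h" unfolding BH_def by (rule BL_carrier)
  have Em: "Em \<in> carrier_mat ?r ?n" unfolding Em_def by (rule sel_carrier)
  have R: "R \<in> carrier_mat ?h ?n" unfolding R_def by (rule sel_carrier)
  have S: "S \<in> carrier_mat (?n + ?r) ?n" unfolding S_def using BT Em by auto
  have kS: "mat_kernel S = {v \<in> mat_kernel BT. Em *\<^sub>v v = 0\<^sub>v ?r}"
  proof (intro equalityI subsetI)
    fix v assume v: "v \<in> mat_kernel S"
    then have vc: "v \<in> carrier_vec ?n" and z: "S *\<^sub>v v = 0\<^sub>v (?n + ?r)" using mat_kernelD[OF S] by auto
    have z0: "0\<^sub>v (?n + ?r) = (0\<^sub>v ?n @\<^sub>v 0\<^sub>v ?r :: complex vec)" by (rule eq_vecI) auto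
    have "(BT *\<^sub>v v) @\<^sub>v (Em *\<^sub>v v) = 0\<^sub>v ?n @\<^sub>v 0\<^sub>v ?r"
      using z mat_mult_append[OF BT Em vc] z0 unfolding S_def by simp
    moreover have "BT *\<^sub>v v \<in> carrier_vec ?n" using BT vc by simp
    ultimately have "BT *\<^sub>v v = 0\<^sub>v ?n \<and> Em *\<^sub>v v = 0\<^sub>v ?r"
      using append_vec_eq[of "BT *\<^sub>v v" ?n "0\<^sub>v ?n"] by simp
    then have "BT *\<^sub>v v = 0\<^sub>v ?n" "Em *\<^sub>v v = 0\<^sub>v ?r" by auto
    then show "v \<in> {v \<in> mat_kernel BT. Em *\<^sub>v v = 0\<^sub>v ?r}" using vc BT by (auto intro: mat_kernelI)
  next
    fix v assume "v \<in> {v \<in> mat_kernel BT. Em *\<^sub>v v = 0\<^sub>v ?r}"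
    then have vc: "v \<in> carrier_vec ?n" and z1: "BT *\<^sub>v v = 0\<^sub>v ?n" and z2: "Em *\<^sub>v v = 0\<^sub>v ?r"
      using mat_kernelD[OF BT] by auto
    have z0: "0\<^sub>v (?n + ?r) = (0\<^sub>v ?n @\<^sub>v 0\<^sub>v ?r :: complex vec)" by (rule eq_vecI) auto
    have "S *\<^sub>v v = 0\<^sub>v (?n + ?r)"
      unfolding S_def mat_mult_append[OF BT Em vc] z1 z2 z0 ..
    then show "v \<in> mat_kernel S" using vc S by (auto intro: mat_kernelI)
  qed
  have L1: "kernel_dim BT \<le> kernel_dim S + ?r" by (rule kernel_dim_stack[OF BT Em S kS])
  have comb: "(\<forall>a\<in>V - HV. fun_of V v a = 0) \<and> eig HV HE (fun_of V v)" if v: "v \<in> mat_kernel S" for v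
  proof -
    have vk: "v \<in> mat_kernel BT" and z: "Em *\<^sub>v v = 0\<^sub>v ?r" using v kS by auto
    have vc: "v \<in> carrier_vec ?n" using mat_kernelD[OF BT vk] by simp
    have ev: "eig V E (fun_of V v)" using ker_BL_iff[OF sg vc] vk unfolding BT_def by simp
    have hyp: "\<forall>u\<in>pendant_vertices V E - U. fun_of V v u = 0"
    proof
      fix u assume "u \<in> pendant_vertices V E - U"
      then have u: "u \<in> U'" unfolding U'_def P_def .
      have finU': "finite U'" using U'V fin finite_subset by blast
      have "(Em *\<^sub>v v) $ idx U' u = fun_of V v u"
        unfolding Em_def using sel_mult[OF fin U'V vc idx(1)[OF finU' u]] idx(2)[OF finU' u] by simp
      moreover have "(Em *\<^sub>v v) $ idx U' u = 0" using z idx(1)[OF finU' u] by simp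
      ultimately show "fun_of V v u = 0" by simp
    qed
    have "(\<forall>a\<in>V - HVs E U. fun_of V v a = 0) \<and> eig (HVs E U) (HEs E U) (fun_of V v)"
      by (rule comb_main[OF refl tree _ _ ev hyp], insert UP cU, auto simp: P_def)
    then show ?thesis unfolding HV_def HE_def .
  qed
  have maps: "R *\<^sub>v v \<in> mat_kernel BH" if v: "v \<in> mat_kernel S" for v
  proof -
    have vc: "v \<in> carrier_vec ?n" using mat_kernelD[OF S v] by simp
    have Rc: "R *\<^sub>v v \<in> carrier_vec ?h" using R vc by simp
    have "eig HV HE (fun_of HV (R *\<^sub>v v)) = eig HV HE (fun_of V v)"
      by (rule eig_cong, unfold R_def, rule sel_fun_of[OF fin HVV vc])
    then have "eig HV HE (fun_of HV (R *\<^sub>v v))" using comb[OF v] by simp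
    then show ?thesis using ker_BL_iff[OF sgH Rc] unfolding BH_def by simp
  qed
  have inj: "v = 0\<^sub>v ?n" if v: "v \<in> mat_kernel S" and z: "R *\<^sub>v v = 0\<^sub>v ?h" for v
  proof -
    have vc: "v \<in> carrier_vec ?n" using mat_kernelD[OF S v] by simp
    have finH: "finite HV" using HVV fin finite_subset by blast
    have "fun_of V v a = 0" if a: "a \<in> V" for a
    proof (cases "a \<in> HV")
      case True
      have "(R *\<^sub>v v) $ idx HV a = fun_of V v a"
        unfolding R_def using sel_mult[OF fin HVV vc idx(1)[OF finH True]] idx(2)[OF finH True] by simp
      moreover have "(R *\<^sub>v v) $ idx HV a = 0" using z idx(1)[OF finH True] by simp
      ultimately show ?thesis by simp
    next
      case False
      then show ?thesis using comb[OF v] a by blast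
    qed
    then show ?thesis by (rule vec_zero_fun_of[OF fin vc])
  qed
  have L2: "kernel_dim S \<le> kernel_dim BH" by (rule kernel_dim_inj_le[OF S BH R maps inj])
  have eqT: "lap_mult V E 1 = kernel_dim BT" unfolding BT_def by (rule lap_mult_eq[OF sg])
  have geH: "kernel_dim BH \<le> lap_mult HV HE 1" unfolding BH_def by (rule lap_mult_ge)
  have "int (lap_mult V E 1) \<ge> int (card P) - 2" using mult unfolding P_def .
  moreover have "card P \<ge> 4" using p4 unfolding P_def .
  ultimately have "2 \<le> lap_mult HV HE 1" using eqT geH L1 L2 cU' by linarith
  then show ?thesis unfolding goal .
qed

end
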